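(* Let $C_N$ be the undirected cycle on $N$ vertices, $r>0$ and $\delta\in[0,1]$, and consider the mixed $\delta$-updating process starting with a single mutant. Define $F_k:=rk+(N-k)$ and $$\gamma_k=\begin{cases}\dfrac{(1-\delta)/F_k+\delta/N}{(1-\delta)r/F_k+2r\delta/((1+r)N)}&\text{if }k=1,\\[8pt]\dfrac{(1-\delta)/F_k+2\delta/((1+r)N)}{(1-\delta)r/F_k+\delta/N}&\text{if }k=N-1,\\[8pt]\dfrac{(1-\delta)/F_k+2\delta/((1+r)N)}{(1-\delta)r/F_k+2r\delta/((1+r)N)}&\text{otherwise}.\end{cases}$$ Then $$\mathsf{fp}_r^\delta(C_N)=\frac{1}{1+\sum_{j=1}^{N-1}\prod_{k=1}^{j}\gamma_k}.$$
   Context: Mixed $\delta$-updating on an undirected unweighted graph $G=(V,E)$ with $N$ vertices: each vertex holds a mutant (fitness $r$) or wild-type (fitness $1$); $f_S(u)$ is the fitness at $u$ when $S$ is the mutant set. At each step, with probability $\delta$ a death-Birth step: choose $v$ uniformly to die, choose a neighbor $u$ of $v$ with probability proportional to $f_S(u)$, $u$ copies its type onto $v$; with probability $1-\delta$ a Birth-death step: choose $u$ with probability proportional to $f_S(u)$ among all vertices, choose a uniformly random neighbor $v$ of $u$, $u$ copies its type onto $v$. $\mathsf{fp}_r^\delta(G)=\frac1N\sum_{u\in V}\mathsf{fp}_r^\delta(G,\{u\})$, where $\mathsf{fp}_r^\delta(G,S_0)$ is the probability all vertices eventually become mutant from mutant set $S_0$ (on the cycle this is the same for every single starting vertex). *)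

theory Defs
  imports Complex_Main
begin

text \<open>Graphs: vertex set V (finite set of nats), symmetric irreflexive adjacency E.
  Mutant set S. Fitness: r for mutants, 1 for wild types.\<close>

definition fit :: "real \<Rightarrow> nat set \<Rightarrow> nat \<Rightarrow> real" where
  "fit r S u = (if u \<in> S then r else 1)"

definition nbrs :: "nat set \<Rightarrow> (nat \<Rightarrow> nat \<Rightarrow> bool) \<Rightarrow> nat \<Rightarrow> nat set" where
  "nbrs V E v = {u \<in> V. E v u}"

definition upd :: "nat set \<Rightarrow> nat \<Rightarrow> nat \<Rightarrow> nat set" where
  "upd S v u = (if u \<in> S then insert v S else S - {v})"

text \<open>hitp V E r d n S = probability that the mixed d-updating process started
  from mutant set S is in the all-mutant state V after n steps
  (first-step decomposition of the n-step transition probability).\<close>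
primrec hitp :: "nat set \<Rightarrow> (nat \<Rightarrow> nat \<Rightarrow> bool) \<Rightarrow> real \<Rightarrow> real \<Rightarrow> nat \<Rightarrow> nat set \<Rightarrow> real" where
  "hitp V E r d 0 S = (if S = V then 1 else 0)"
| "hitp V E r d (Suc n) S =
     d * (\<Sum>v\<in>V. (1 / real (card V)) *
            (\<Sum>u\<in>nbrs V E v. fit r S u / (\<Sum>w\<in>nbrs V E v. fit r S w)
                                 * hitp V E r d n (upd S v u)))
   + (1 - d) * (\<Sum>u\<in>V. fit r S u / (\<Sum>w\<in>V. fit r S w) *
            (\<Sum>v\<in>nbrs V E u. (1 / real (card (nbrs V E u)))
                                 * hitp V E r d n (upd S v u)))"

text \<open>Fixation probability from S0: probability of eventually reaching the
  (absorbing) all-mutant state = limit of the n-step probabilities.\<close>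
definition fp_from :: "nat set \<Rightarrow> (nat \<Rightarrow> nat \<Rightarrow> bool) \<Rightarrow> real \<Rightarrow> real \<Rightarrow> nat set \<Rightarrow> real" where
  "fp_from V E r d S0 = lim (\<lambda>n. hitp V E r d n S0)"

definition fp :: "nat set \<Rightarrow> (nat \<Rightarrow> nat \<Rightarrow> bool) \<Rightarrow> real \<Rightarrow> real \<Rightarrow> real" where
  "fp V E r d = (1 / real (card V)) * (\<Sum>u\<in>V. fp_from V E r d {u})"

definition cycle_adj :: "nat \<Rightarrow> nat \<Rightarrow> nat \<Rightarrow> bool" where
  "cycle_adj N u v = (v = (u + 1) mod N \<or> u = (v + 1) mod N)"

definition Fk :: "nat \<Rightarrow> real \<Rightarrow> nat \<Rightarrow> real" where
  "Fk N r k = r * real k + (real N - real k)"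

definition gamma :: "nat \<Rightarrow> real \<Rightarrow> real \<Rightarrow> nat \<Rightarrow> real" where
  "gamma N r d k =
    (if k = 1 then
       ((1 - d) / Fk N r k + d / real N) /
       ((1 - d) * r / Fk N r k + 2 * r * d / ((1 + r) * real N))
     else if k = N - 1 then
       ((1 - d) / Fk N r k + 2 * d / ((1 + r) * real N)) /
       ((1 - d) * r / Fk N r k + d / real N)
     else
       ((1 - d) / Fk N r k + 2 * d / ((1 + r) * real N)) /
       ((1 - d) * r / Fk N r k + 2 * r * d / ((1 + r) * real N)))"

end

theory Submission
  imports Defs
begin


definition nx :: "nat \<Rightarrow> nat \<Rightarrow> nat" where "nx N v = (v + 1) mod N"
definition pv :: "nat \<Rightarrow> nat \<Rightarrow> nat" where "pv N v = (v + N - 1) mod N"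

lemma adj_back:
  fixes N u v :: nat
  assumes "N \<ge> 3" "u < N" "v < N"
  shows "(v = (u + 1) mod N) \<longleftrightarrow> (u = (v + N - 1) mod N)"
proof (cases "u = N - 1")
  case True
  then show ?thesis using assms by (auto simp: mod_if)
next
  case False
  then have "u + 1 < N" using assms by auto
  then show ?thesis using assms by (auto simp: mod_if)
qed

lemma nbrs_cyc:
  assumes "N \<ge> 3" "v < N"
  shows "nbrs {0..<N} (cycle_adj N) v = {nx N v, pv N v}"
  using assms adj_back[OF assms(1) _ assms(2)]
  by (auto simp: nbrs_def cycle_adj_def nx_def pv_def)

lemma nx_lt: "N \<ge> 3 \<Longrightarrow> nx N v < N" by (simp add: nx_def)
lemma pv_lt: "N \<ge> 3 \<Longrightarrow> pv N v < N" by (simp add: pv_def)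

lemma nx_pv_ne:
  assumes "N \<ge> 3" "v < N"
  shows "nx N v \<noteq> pv N v"
proof -
  consider "v = 0" | "v = N - 1" | "0 < v \<and> v < N - 1" using assms by linarith
  then show ?thesis
  proof cases
    case 1 then show ?thesis using assms by (simp add: nx_def pv_def mod_if)
  next
    case 2 then show ?thesis using assms by (simp add: nx_def pv_def mod_if)
  next
    case 3
    then obtain w where w: "v = Suc w" by (cases v) auto
    then have "pv N v = (w + N) mod N" by (simp add: pv_def)
    then have "pv N v = v - 1" using w 3 by simp
    moreover have "Suc v < N" using 3 by linarith
    then have "nx N v = v + 1" by (simp add: nx_def)
    ultimately show ?thesis using 3 by simp
  qed
qed

lemma hitp_step:
  assumes N3: "N \<ge> 3"
  shows "hitp {0..<N} (cycle_adj N) r d (Suc n) S =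
    d * (\<Sum>v\<in>{0..<N}. (1 / real N) *
      (fit r S (nx N v) / (fit r S (nx N v) + fit r S (pv N v)) * hitp {0..<N} (cycle_adj N) r d n (upd S v (nx N v))
     + fit r S (pv N v) / (fit r S (nx N v) + fit r S (pv N v)) * hitp {0..<N} (cycle_adj N) r d n (upd S v (pv N v))))
  + (1 - d) * (\<Sum>u\<in>{0..<N}. fit r S u / (\<Sum>w\<in>{0..<N}. fit r S w) *
      ((1/2) * hitp {0..<N} (cycle_adj N) r d n (upd S (nx N u) u)
     + (1/2) * hitp {0..<N} (cycle_adj N) r d n (upd S (pv N u) u)))"
proof -
  have c: "card {0..<N} = N" by simp
  have A: "(\<Sum>u\<in>nbrs {0..<N} (cycle_adj N) v. fit r S u / (\<Sum>w\<in>nbrs {0..<N} (cycle_adj N) v. fit r S w)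
                                 * hitp {0..<N} (cycle_adj N) r d n (upd S v u)) =
     fit r S (nx N v) / (fit r S (nx N v) + fit r S (pv N v)) * hitp {0..<N} (cycle_adj N) r d n (upd S v (nx N v))
     + fit r S (pv N v) / (fit r S (nx N v) + fit r S (pv N v)) * hitp {0..<N} (cycle_adj N) r d n (upd S v (pv N v))"
    if "v \<in> {0..<N}" for v
    using nbrs_cyc[OF N3, of v] nx_pv_ne[OF N3, of v] that by simp
  have B: "(\<Sum>v\<in>nbrs {0..<N} (cycle_adj N) u. (1 / real (card (nbrs {0..<N} (cycle_adj N) u)))
                                 * hitp {0..<N} (cycle_adj N) r d n (upd S v u)) =
      (1/2) * hitp {0..<N} (cycle_adj N) r d n (upd S (nx N u) u)
     + (1/2) * hitp {0..<N} (cycle_adj N) r d n (upd S (pv N u) u)"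
    if "u \<in> {0..<N}" for u
    using nbrs_cyc[OF N3, of u] nx_pv_ne[OF N3, of u] that by simp
  have A2: "(\<Sum>v\<in>{0..<N}. (1 / real N) * (\<Sum>u\<in>nbrs {0..<N} (cycle_adj N) v. fit r S u / (\<Sum>w\<in>nbrs {0..<N} (cycle_adj N) v. fit r S w)
                                 * hitp {0..<N} (cycle_adj N) r d n (upd S v u))) =
    (\<Sum>v\<in>{0..<N}. (1 / real N) *
      (fit r S (nx N v) / (fit r S (nx N v) + fit r S (pv N v)) * hitp {0..<N} (cycle_adj N) r d n (upd S v (nx N v))
     + fit r S (pv N v) / (fit r S (nx N v) + fit r S (pv N v)) * hitp {0..<N} (cycle_adj N) r d n (upd S v (pv N v))))"
    by (rule sum.cong[OF refl]) (simp only: A)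
  have B2: "(\<Sum>u\<in>{0..<N}. fit r S u / (\<Sum>w\<in>{0..<N}. fit r S w) *
            (\<Sum>v\<in>nbrs {0..<N} (cycle_adj N) u. (1 / real (card (nbrs {0..<N} (cycle_adj N) u)))
                                 * hitp {0..<N} (cycle_adj N) r d n (upd S v u))) =
     (\<Sum>u\<in>{0..<N}. fit r S u / (\<Sum>w\<in>{0..<N}. fit r S w) *
      ((1/2) * hitp {0..<N} (cycle_adj N) r d n (upd S (nx N u) u)
     + (1/2) * hitp {0..<N} (cycle_adj N) r d n (upd S (pv N u) u)))"
    by (rule sum.cong[OF refl]) (simp only: B)
  show ?thesis
    unfolding hitp.simps c A2 B2 ..
qed


definition rt :: "nat \<Rightarrow> nat \<Rightarrow> nat \<Rightarrow> nat" where "rt N c x = (x + c) mod N"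

lemma rt_inv:
  assumes "N \<ge> 3" "x < N"
  shows "rt N (N - c mod N) (rt N c x) = x"
proof -
  have "rt N (N - c mod N) (rt N c x) = ((x + c) mod N + (N - c mod N)) mod N" by (simp add: rt_def)
  also have "\<dots> = (x + c mod N + (N - c mod N)) mod N" by (metis mod_add_left_eq mod_add_right_eq)
  also have "x + c mod N + (N - c mod N) = x + N" using assms by (simp add: less_imp_le_nat)
  finally show ?thesis using assms by simp
qed

lemma rt_inj: "N \<ge> 3 \<Longrightarrow> inj_on (rt N c) {0..<N}"
  by (rule inj_on_inverseI[where g="rt N (N - c mod N)"]) (simp add: rt_inv)

lemma rt_lt: "N \<ge> 3 \<Longrightarrow> rt N c x < N" by (simp add: rt_def)

lemma rt_img: "N \<ge> 3 \<Longrightarrow> rt N c ` {0..<N} = {0..<N}"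
  by (rule endo_inj_surj) (auto simp: rt_lt rt_inj)

lemma nx_rt: "N \<ge> 3 \<Longrightarrow> nx N (rt N c x) = rt N c (nx N x)"
  by (simp add: nx_def rt_def mod_simps ac_simps)

lemma pv_rt: "N \<ge> 3 \<Longrightarrow> pv N (rt N c x) = rt N c (pv N x)"
proof -
  assume N: "N \<ge> 3"
  have "pv N (rt N c x) = ((x + c) mod N + (N - 1)) mod N" using N by (simp add: pv_def rt_def)
  also have "\<dots> = (x + c + (N - 1)) mod N" by (simp add: mod_simps)
  also have "\<dots> = ((x + (N - 1)) mod N + c) mod N" by (simp add: mod_simps ac_simps)
  also have "\<dots> = rt N c (pv N x)" using N by (simp add: pv_def rt_def)
  finally show ?thesis .
qed

lemma upd_sub: "S \<subseteq> {0..<N} \<Longrightarrow> v < N \<Longrightarrow> upd S v u \<subseteq> {0..<N}"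
  by (auto simp: upd_def)

lemma hitp_rt:
  assumes N3: "N \<ge> 3"
  shows "S \<subseteq> {0..<N} \<Longrightarrow> hitp {0..<N} (cycle_adj N) r d n (rt N c ` S) = hitp {0..<N} (cycle_adj N) r d n S"
proof (induction n arbitrary: S)
  case 0
  have "rt N c ` S = {0..<N} \<longleftrightarrow> rt N c ` S = rt N c ` {0..<N}" using rt_img[OF N3] by simp
  also have "\<dots> \<longleftrightarrow> S = {0..<N}" using inj_on_image_eq_iff[OF rt_inj[OF N3] 0] by simp
  finally show ?case by simp
next
  case (Suc n)
  let ?f = "rt N c"
  let ?H = "hitp {0..<N} (cycle_adj N) r d n"
  have inj: "inj_on ?f {0..<N}" by (rule rt_inj[OF N3])
  have img: "?f ` {0..<N} = {0..<N}" by (rule rt_img[OF N3])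
  have reidx: "(\<Sum>v\<in>{0..<N}. g v) = (\<Sum>v\<in>{0..<N}. g (?f v))" for g :: "nat \<Rightarrow> real"
  proof -
    have "(\<Sum>v\<in>{0..<N}. g v) = (\<Sum>v\<in>?f ` {0..<N}. g v)" using img by simp
    also have "\<dots> = (\<Sum>v\<in>{0..<N}. g (?f v))" using sum.reindex[OF inj] by simp
    finally show ?thesis .
  qed
  have fitf: "fit r (?f ` S) (?f x) = fit r S x" if "x < N" for x
    using inj_on_image_mem_iff[OF inj, of x S] Suc.prems that by (simp add: fit_def)
  have updf: "upd (?f ` S) (?f v) (?f u) = ?f ` upd S v u" if "v < N" "u < N" for u v
  proof -
    have m: "?f u \<in> ?f ` S \<longleftrightarrow> u \<in> S" using inj_on_image_mem_iff[OF inj, of u S] Suc.prems that by simp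
    have "?f ` S - ?f ` {v} = ?f ` (S - {v})"
      using inj_on_image_set_diff[OF inj, of S "{v}"] Suc.prems that by auto
    then show ?thesis using m by (simp add: upd_def)
  qed
  have Hf: "?H (?f ` upd S v u) = ?H (upd S v u)" if "v < N" for u v
    using Suc.IH[OF upd_sub[OF Suc.prems that]] .
  have fitsum: "(\<Sum>w\<in>{0..<N}. fit r (?f ` S) w) = (\<Sum>w\<in>{0..<N}. fit r S w)"
    by (subst reidx) (simp add: fitf)
  have nxl: "nx N v < N" "pv N v < N" for v using nx_lt[OF N3] pv_lt[OF N3] by auto
  have s1: "(\<Sum>v\<in>{0..<N}. (1 / real N) *
      (fit r (?f ` S) (nx N v) / (fit r (?f ` S) (nx N v) + fit r (?f ` S) (pv N v)) * ?H (upd (?f ` S) v (nx N v))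
     + fit r (?f ` S) (pv N v) / (fit r (?f ` S) (nx N v) + fit r (?f ` S) (pv N v)) * ?H (upd (?f ` S) v (pv N v))))
    = (\<Sum>v\<in>{0..<N}. (1 / real N) *
      (fit r S (nx N v) / (fit r S (nx N v) + fit r S (pv N v)) * ?H (upd S v (nx N v))
     + fit r S (pv N v) / (fit r S (nx N v) + fit r S (pv N v)) * ?H (upd S v (pv N v))))"
    apply (subst reidx)
    apply (rule sum.cong[OF refl])
    apply (simp add: nx_rt[OF N3] pv_rt[OF N3] fitf updf Hf nxl)
    done
  have s2': "(\<Sum>u\<in>{0..<N}. fit r (?f ` S) u / Fc *
      ((1/2) * ?H (upd (?f ` S) (nx N u) u) + (1/2) * ?H (upd (?f ` S) (pv N u) u)))
    = (\<Sum>u\<in>{0..<N}. fit r S u / Fc *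
      ((1/2) * ?H (upd S (nx N u) u) + (1/2) * ?H (upd S (pv N u) u)))" for Fc
    apply (subst reidx)
    apply (rule sum.cong[OF refl])
    apply (simp add: nx_rt[OF N3] pv_rt[OF N3] fitf updf Hf nxl)
    done
  show ?case
    unfolding hitp_step[OF N3] s1 s2' fitsum ..
qed


lemma wsum1: "(a::real) + b \<noteq> 0 \<Longrightarrow> a/(a+b)*X + b/(a+b)*X = X"
  by (metis add_divide_distrib distrib_right divide_self_if mult_1)

lemma comb:
  fixes sD sB a b c e p q X Y Z d :: real
  assumes "sD = a * (X - Y) + b * (Z - Y)" "sB = c * (X - Y) + e * (Z - Y)"
    "p = (1 - d) * c + d * a" "q = (1 - d) * e + d * b"
  shows "d * (Y + sD) + (1 - d) * (Y + sB) = p * X + q * Z + (1 - p - q) * Y"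
  unfolding assms by (simp add: algebra_simps)

lemma fit_pos: "r > 0 \<Longrightarrow> fit r S u > 0" by (simp add: fit_def)

lemma diff_notin: "x \<notin> S \<Longrightarrow> S - {x} = S" by auto

lemma fitsum_k:
  assumes "k \<le> N"
  shows "(\<Sum>w\<in>{0..<N}. fit r {0..<k} w) = Fk N r k"
proof -
  have "(\<Sum>w\<in>{0..<N}. fit r {0..<k} w) = (\<Sum>w\<in>{0..<k}. fit r {0..<k} w) + (\<Sum>w\<in>{k..<N}. fit r {0..<k} w)"
    by (rule sum.atLeastLessThan_concat[symmetric]) (use assms in auto)
  also have "(\<Sum>w\<in>{0..<k}. fit r {0..<k} w) = (\<Sum>w\<in>{0..<k}. r)" by (rule sum.cong) (auto simp: fit_def)
  also have "(\<Sum>w\<in>{k..<N}. fit r {0..<k} w) = (\<Sum>w\<in>{k..<N}. 1)" by (rule sum.cong) (auto simp: fit_def)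
  finally show ?thesis using assms by (simp add: Fk_def of_nat_diff)
qed

lemma hitp_empty:
  assumes N3: "N \<ge> 3"
  shows "hitp {0..<N} (cycle_adj N) r d n {} = 0"
proof (induction n)
  case 0 then show ?case using N3 by auto
next
  case (Suc n)
  have "upd {} v u = {}" for v u by (simp add: upd_def)
  then show ?case unfolding hitp_step[OF N3] using Suc by simp
qed

lemma hitp_full:
  assumes N3: "N \<ge> 3" and r: "r > 0"
  shows "hitp {0..<N} (cycle_adj N) r d n {0..<N} = 1"
proof (induction n)
  case 0 then show ?case by simp
next
  case (Suc n)
  have u: "upd {0..<N} v u = {0..<N}" if "v < N" "u < N" for v u using that by (auto simp: upd_def)
  have f: "fit r {0..<N} u = r" if "u < N" for u using that by (simp add: fit_def)
  have s1: "(\<Sum>v\<in>{0..<N}. (1 / real N) *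
      (fit r {0..<N} (nx N v) / (fit r {0..<N} (nx N v) + fit r {0..<N} (pv N v)) * hitp {0..<N} (cycle_adj N) r d n (upd {0..<N} v (nx N v))
     + fit r {0..<N} (pv N v) / (fit r {0..<N} (nx N v) + fit r {0..<N} (pv N v)) * hitp {0..<N} (cycle_adj N) r d n (upd {0..<N} v (pv N v))))
     = (\<Sum>v\<in>{0..<N}. 1 / real N)"
    by (rule sum.cong) (use r in \<open>auto simp: u f nx_lt[OF N3] pv_lt[OF N3] Suc\<close>)
  have s2: "(\<Sum>u\<in>{0..<N}. fit r {0..<N} u / (\<Sum>w\<in>{0..<N}. fit r {0..<N} w) *
      ((1/2) * hitp {0..<N} (cycle_adj N) r d n (upd {0..<N} (nx N u) u)
     + (1/2) * hitp {0..<N} (cycle_adj N) r d n (upd {0..<N} (pv N u) u))) = (\<Sum>u\<in>{0..<N}. 1 / real N)"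
    by (rule sum.cong) (use r N3 in \<open>auto simp: u f nx_lt[OF N3] pv_lt[OF N3] Suc\<close>)
  show ?case unfolding hitp_step[OF N3] s1 s2 using N3 by simp
qed

lemma sum_split_B:
  fixes t c :: "nat \<Rightarrow> real"
  assumes "finite A" "B \<subseteq> A" "\<And>v. v \<in> A - B \<Longrightarrow> t v = c v"
  shows "sum t A = sum c A + sum (\<lambda>v. t v - c v) B"
proof -
  have "sum t A = sum c A + sum (\<lambda>v. t v - c v) A" by (simp add: sum_subtractf)
  also have "sum (\<lambda>v. t v - c v) A = sum (\<lambda>v. t v - c v) B"
    by (rule sum.mono_neutral_right) (use assms in auto)
  finally show ?thesis .
qed

lemma nx_val: "v + 1 < N \<Longrightarrow> nx N v = v + 1" by (simp add: nx_def)
lemma nx_last: "N \<ge> 3 \<Longrightarrow> nx N (N - 1) = 0" by (simp add: nx_def)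
lemma pv_val: "0 < v \<Longrightarrow> v < N \<Longrightarrow> pv N v = v - 1"
proof -
  assume a: "0 < v" "v < N"
  then obtain w where w: "v = Suc w" by (cases v) auto
  then have "pv N v = (w + N) mod N" by (simp add: pv_def)
  then show ?thesis using w a by simp
qed
lemma pv_0: "N \<ge> 3 \<Longrightarrow> pv N 0 = N - 1" by (simp add: pv_def)


definition pu :: "nat \<Rightarrow> real \<Rightarrow> real \<Rightarrow> nat \<Rightarrow> real" where
  "pu N r d k = (1 - d) * r / Fk N r k + (if k = N - 1 then d / real N else 2 * r * d / ((1 + r) * real N))"
definition pd :: "nat \<Rightarrow> real \<Rightarrow> real \<Rightarrow> nat \<Rightarrow> real" where
  "pd N r d k = (1 - d) / Fk N r k + (if k = 1 then d / real N else 2 * d / ((1 + r) * real N))"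

lemma L1:
  assumes "1 \<le> k" "k \<le> N - 1"
  shows "{0..<k} - {0} = rt N 1 ` {0..<k-1}"
proof -
  have "rt N 1 ` {0..<k-1} = Suc ` {0..<k-1}"
    by (rule image_cong) (use assms in \<open>auto simp: rt_def\<close>)
  also have "\<dots> = {1..<k}" using assms by (simp add: image_Suc_atLeastLessThan)
  finally show ?thesis by auto
qed

lemma L2:
  assumes "N \<ge> 3" "k \<le> N - 1"
  shows "insert (N - 1) {0..<k} = rt N (N - 1) ` {0..<Suc k}"
proof -
  have "rt N (N - 1) ` {0..<Suc k} = insert (rt N (N - 1) 0) (rt N (N - 1) ` Suc ` {0..<k})"
    by (simp add: atLeast0_lessThan_Suc_eq_insert_0)
  also have "rt N (N - 1) ` Suc ` {0..<k} = {0..<k}"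
  proof -
    have "rt N (N - 1) ` Suc ` {0..<k} = (\<lambda>y. y) ` {0..<k}"
      unfolding image_image by (rule image_cong) (use assms in \<open>auto simp: rt_def\<close>)
    then show ?thesis by simp
  qed
  also have "rt N (N - 1) 0 = N - 1" using assms by (simp add: rt_def)
  finally show ?thesis by simp
qed

lemma main_comp:
  fixes G :: "nat \<Rightarrow> real"
  assumes N3: "N \<ge> 3" and r: "r > 0" and k1: "1 \<le> k" and kN: "k \<le> N - 1"
    and IH: "\<And>j. j \<le> N \<Longrightarrow> hitp {0..<N} (cycle_adj N) r d n {0..<j} = G j"
  shows "hitp {0..<N} (cycle_adj N) r d (Suc n) {0..<k}
     = pu N r d k * G (k + 1) + pd N r d k * G (k - 1) + (1 - pu N r d k - pd N r d k) * G k"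
proof -
  define S where "S = {0..<k}"
  define H where "H = hitp {0..<N} (cycle_adj N) r d n"
  define F where "F = Fk N r k"
  have Smem: "x \<in> S \<longleftrightarrow> x < k" for x by (simp add: S_def)
  have HR: "H (rt N c ` {0..<j}) = G j" if "j \<le> N" for c j
    unfolding H_def using hitp_rt[OF N3, of "{0..<j}"] IH[OF that] that by simp
  have HS: "H S = G k" using IH kN by (simp add: H_def S_def)
  have Hins: "H (insert k S) = G (k + 1)" using IH[of "Suc k"] kN N3 by (simp add: H_def S_def atLeastLessThanSuc)
  have Hins2: "H (insert (N - 1) S) = G (k + 1)" using HR[of "Suc k" "N - 1"] L2[OF N3 kN] kN N3
    by (simp add: S_def)
  have Hd1: "H (S - {k - 1}) = G (k - 1)"
  proof -
    have "S - {k - 1} = {0..<k-1}" using k1 by (auto simp: S_def)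
    then show ?thesis using IH[of "k - 1"] kN by (simp add: H_def)
  qed
  have Hd0: "H (S - {0}) = G (k - 1)" using HR[of "k - 1" 1] L1[OF k1 kN] kN by (simp add: S_def)
  have Fpos: "F > 0"
  proof -
    have "k + 1 \<le> N" using kN N3 by linarith
    then have "real k + 1 \<le> real N" by (metis of_nat_1 of_nat_add of_nat_le_iff)
    moreover have "r * real k \<ge> 0" using r by simp
    ultimately show ?thesis unfolding F_def Fk_def by linarith
  qed
  have Fsum: "(\<Sum>w\<in>{0..<N}. fit r S w) = F" unfolding S_def F_def using fitsum_k kN by simp
  define tD where "tD v = (1 / real N) *
      (fit r S (nx N v) / (fit r S (nx N v) + fit r S (pv N v)) * H (upd S v (nx N v))
     + fit r S (pv N v) / (fit r S (nx N v) + fit r S (pv N v)) * H (upd S v (pv N v)))" for v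
  define tB where "tB u = fit r S u / F * ((1/2) * H (upd S (nx N u) u) + (1/2) * H (upd S (pv N u) u))" for u
  have step: "hitp {0..<N} (cycle_adj N) r d (Suc n) S = d * sum tD {0..<N} + (1 - d) * sum tB {0..<N}"
    unfolding hitp_step[OF N3] Fsum tD_def tB_def H_def ..
  define B where "B = {0, k - 1, k, N - 1}"
  have BV: "B \<subseteq> {0..<N}" using kN N3 by (auto simp: B_def)
  have flat: "(nx N v \<in> S \<longleftrightarrow> v \<in> S) \<and> (pv N v \<in> S \<longleftrightarrow> v \<in> S)" if "v \<in> {0..<N} - B" for v
  proof -
    have v: "0 < v" "v + 1 < N" "v \<noteq> k - 1" "v \<noteq> k" using that by (auto simp: B_def)
    then show ?thesis using k1 by (simp add: nx_val pv_val Smem) linarith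
  qed
  have upd_flat: "upd S v (nx N v) = S" "upd S v (pv N v) = S" "upd S (nx N v) v = S" "upd S (pv N v) v = S"
    if "v \<in> {0..<N} - B" for v
    using flat[OF that] by (auto simp: upd_def)
  have flatD: "tD v = G k / real N" if "v \<in> {0..<N} - B" for v
  proof -
    have "fit r S (nx N v) + fit r S (pv N v) > 0" using fit_pos[OF r] by (simp add: add_pos_pos)
    then have "fit r S (nx N v) / (fit r S (nx N v) + fit r S (pv N v)) * G k + fit r S (pv N v) / (fit r S (nx N v) + fit r S (pv N v)) * G k = G k"
      by (intro wsum1) simp
    then show ?thesis unfolding tD_def upd_flat[OF that] HS by simp
  qed
  have flatB: "tB v = fit r S v / F * G k" if "v \<in> {0..<N} - B" for v
    unfolding tB_def upd_flat[OF that] HS by simp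
  have sD: "sum tD {0..<N} = G k + (\<Sum>v\<in>B. tD v - G k / real N)"
    using sum_split_B[of "{0..<N}" B tD "\<lambda>_. G k / real N", OF _ BV flatD] N3 by simp
  have sB: "sum tB {0..<N} = G k + (\<Sum>v\<in>B. tB v - fit r S v / F * G k)"
  proof -
    have "sum tB {0..<N} = (\<Sum>v\<in>{0..<N}. fit r S v / F * G k) + (\<Sum>v\<in>B. tB v - fit r S v / F * G k)"
      using sum_split_B[of "{0..<N}" B tB "\<lambda>v. fit r S v / F * G k", OF _ BV flatB] by simp
    also have "(\<Sum>v\<in>{0..<N}. fit r S v / F * G k) = G k"
      using Fsum Fpos by (simp add: sum_distrib_right[symmetric] sum_divide_distrib[symmetric])
    finally show ?thesis .
  qed
  have Hd1': "H (S - {k - Suc 0}) = G (k - Suc 0)" using Hd1 by simp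
  have Hins2': "H (insert (N - Suc 0) S) = G (Suc k)" using Hins2 by simp
  have nxl': "nx N (N - Suc 0) = 0" "pv N 0 = N - Suc 0" using nx_last[OF N3] pv_0[OF N3] by simp_all
  note V = Hd1' Hins2' nxl' nx_val pv_val nx_last[OF N3] pv_0[OF N3] Smem upd_def fit_def diff_notin HS Hins Hins2 Hd1 Hd0 insert_absorb
  have goal0: "hitp {0..<N} (cycle_adj N) r d (Suc n) {0..<k} =
     d * (G k + (\<Sum>v\<in>B. tD v - G k / real N)) + (1 - d) * (G k + (\<Sum>v\<in>B. tB v - fit r S v / F * G k))"
    using step sD sB by (simp add: S_def)
  have rp: "r + 1 > 0" "1 + r > 0" using r by auto
  have Np: "real N > 0" using N3 by simp
  consider (one) "k = 1" | (mid) "2 \<le> k" "k \<le> N - 2" | (last) "k = N - 1" "k \<noteq> 1" using k1 kN by linarith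
  then show ?thesis
  proof cases
    case mid
    have mid': "\<not> N - Suc 0 < k" "\<not> N - Suc 0 \<le> k" "k \<noteq> N - Suc 0" "\<not> N - Suc (Suc 0) < k" "k - Suc 0 \<noteq> k" "k - Suc 0 \<noteq> N - Suc 0" "0 \<noteq> k - Suc 0" "0 \<noteq> N - Suc 0" "0 \<noteq> k" using mid N3 by auto
    have D0: "tD 0 = (1 / real N) * (r / (r + 1) * G k + 1 / (r + 1) * G (k - 1))"
      using mid mid' N3 by (simp add: tD_def V add.commute)
    have D1: "tD (k - 1) = (1 / real N) * (1 / (1 + r) * G (k - 1) + r / (1 + r) * G k)"
      using mid mid' N3 by (simp add: tD_def V add.commute)
    have D2: "tD k = (1 / real N) * (1 / (1 + r) * G k + r / (1 + r) * G (k + 1))"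
      using mid mid' N3 by (simp add: tD_def V add.commute)
    have D3: "tD (N - 1) = (1 / real N) * (r / (r + 1) * G (k + 1) + 1 / (r + 1) * G k)"
      using mid mid' N3 by (simp add: tD_def V add.commute)
    have B0: "tB 0 = r / F * (G k / 2 + G (k + 1) / 2)"
      using mid mid' N3 by (simp add: tB_def V)
    have B1: "tB (k - 1) = r / F * (G (k + 1) / 2 + G k / 2)"
      using mid mid' N3 by (simp add: tB_def V)
    have B2: "tB k = 1 / F * (G k / 2 + G (k - 1) / 2)"
      using mid mid' N3 by (simp add: tB_def V)
    have B3: "tB (N - 1) = 1 / F * (G (k - 1) / 2 + G k / 2)"
      using mid mid' N3 by (simp add: tB_def V)
    have f: "fit r S 0 = r" "fit r S (k - 1) = r" "fit r S k = 1" "fit r S (N - 1) = 1"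
      using mid by (auto simp: fit_def Smem)
    have sBD: "(\<Sum>v\<in>B. tD v - G k / real N) = (tD 0 - G k / real N) + (tD (k - 1) - G k / real N) + (tD k - G k / real N) + (tD (N - 1) - G k / real N)"
      using mid mid' N3 by (simp add: B_def)
    have sBB: "(\<Sum>v\<in>B. tB v - fit r S v / F * G k) = (tB 0 - fit r S 0 / F * G k) + (tB (k - 1) - fit r S (k - 1) / F * G k) + (tB k - fit r S k / F * G k) + (tB (N - 1) - fit r S (N - 1) / F * G k)"
      using mid mid' N3 by (simp add: B_def)
    have M: "(1 + r) * real N > 0" using rp Np by simp
    have eD: "(\<Sum>v\<in>B. tD v - G k / real N) = 2*r/((1+r)*real N) * (G (k+1) - G k) + 2/((1+r)*real N) * (G (k-1) - G k)"
    proof -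
      have a: "tD 0 - G k / real N = (G (k-1) - G k) / ((1+r)*real N)"
        unfolding D0 using rp Np by (simp add: divide_simps; simp add: algebra_simps)
      have b: "tD (k-1) - G k / real N = (G (k-1) - G k) / ((1+r)*real N)"
        unfolding D1 using rp Np by (simp add: divide_simps; simp add: algebra_simps)
      have c: "tD k - G k / real N = r * (G (k+1) - G k) / ((1+r)*real N)"
        unfolding D2 using rp Np by (simp add: divide_simps; simp add: algebra_simps)
      have e: "tD (N-1) - G k / real N = r * (G (k+1) - G k) / ((1+r)*real N)"
        unfolding D3 using rp Np by (simp add: divide_simps; simp add: algebra_simps)
      show ?thesis unfolding sBD a b c e by (simp add: divide_simps; simp add: algebra_simps)
    qed
    have eB: "(\<Sum>v\<in>B. tB v - fit r S v / F * G k) = r/F * (G (k+1) - G k) + 1/F * (G (k-1) - G k)"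
      unfolding sBB B0 B1 B2 B3 f using Fpos by (simp add: divide_simps; simp add: algebra_simps)
    have pu': "pu N r d k = (1-d) * (r/F) + d * (2*r/((1+r)*real N))" using mid' unfolding pu_def F_def by simp
    have pd': "pd N r d k = (1-d) * (1/F) + d * (2/((1+r)*real N))" using mid unfolding pd_def F_def by simp
    show ?thesis unfolding goal0 by (rule comb[OF eD eB pu' pd'])
  next
    case one
    have o': "k - Suc 0 = 0" "\<not> N - Suc 0 < k" "\<not> N - Suc 0 \<le> k" "k \<noteq> N - Suc 0" "\<not> N - Suc (Suc 0) < k"
      "0 \<noteq> N - Suc 0" "0 \<noteq> k" "k + 1 < N" "k \<noteq> N - Suc 0" "Suc k < N" using one N3 by auto
    have Hk1: "H (insert (Suc 0) S) = G (Suc (Suc 0))" using Hins one by simp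
    note V = V Hk1
    have D0: "tD 0 = G (k - 1) / real N" using o' one N3 by (simp add: tD_def V)
    have D2: "tD k = (1 / real N) * (1 / (1 + r) * G k + r / (1 + r) * G (k + 1))"
      using o' one N3 by (simp add: tD_def V add.commute)
    have D3: "tD (N - 1) = (1 / real N) * (r / (r + 1) * G (k + 1) + 1 / (r + 1) * G k)"
      using o' one N3 by (simp add: tD_def V add.commute)
    have B0: "tB 0 = r / F * (G (k + 1) / 2 + G (k + 1) / 2)"
      using o' one N3 by (simp add: tB_def V)
    have B2: "tB k = 1 / F * (G k / 2 + G (k - 1) / 2)"
      using o' one N3 by (simp add: tB_def V)
    have B3: "tB (N - 1) = 1 / F * (G (k - 1) / 2 + G k / 2)"
      using o' one N3 by (simp add: tB_def V)
    have f: "fit r S 0 = r" "fit r S k = 1" "fit r S (N - 1) = 1"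
      using one N3 by (auto simp: fit_def Smem)
    have sBD: "(\<Sum>v\<in>B. tD v - G k / real N) = (tD 0 - G k / real N) + (tD k - G k / real N) + (tD (N - 1) - G k / real N)"
      using o' N3 by (simp add: B_def)
    have sBB: "(\<Sum>v\<in>B. tB v - fit r S v / F * G k) = (tB 0 - fit r S 0 / F * G k) + (tB k - fit r S k / F * G k) + (tB (N - 1) - fit r S (N - 1) / F * G k)"
      using o' N3 by (simp add: B_def)
    have eD: "(\<Sum>v\<in>B. tD v - G k / real N) = 2*r/((1+r)*real N) * (G (k+1) - G k) + 1/real N * (G (k-1) - G k)"
    proof -
      have a: "tD 0 - G k / real N = (G (k-1) - G k) / real N"
        unfolding D0 using rp Np by (simp add: divide_simps; simp add: algebra_simps)
      have c: "tD k - G k / real N = r * (G (k+1) - G k) / ((1+r)*real N)"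
        unfolding D2 using rp Np by (simp add: divide_simps; simp add: algebra_simps)
      have e: "tD (N-1) - G k / real N = r * (G (k+1) - G k) / ((1+r)*real N)"
        unfolding D3 using rp Np by (simp add: divide_simps; simp add: algebra_simps)
      show ?thesis unfolding sBD a c e by (simp add: divide_simps; simp add: algebra_simps)
    qed
    have eB: "(\<Sum>v\<in>B. tB v - fit r S v / F * G k) = r/F * (G (k+1) - G k) + 1/F * (G (k-1) - G k)"
      unfolding sBB B0 B2 B3 f using Fpos by (simp add: divide_simps; simp add: algebra_simps)
    have pu': "pu N r d k = (1-d) * (r/F) + d * (2*r/((1+r)*real N))" using o' unfolding pu_def F_def by simp
    have pd': "pd N r d k = (1-d) * (1/F) + d * (1/real N)" using one unfolding pd_def F_def by simp
    show ?thesis unfolding goal0 by (rule comb[OF eD eB pu' pd'])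
  next
    case last
    have l': "N - Suc 0 = k" "N - Suc (Suc 0) = k - Suc 0" "k - Suc 0 \<noteq> k" "0 \<noteq> k - Suc 0" "0 \<noteq> k"
      "k - Suc 0 + 1 < N" "0 < k - Suc 0" "k < N" "Suc 0 < k" "Suc k = N" "k + 1 = N" using last N3 by auto
    have nk: "nx N k = 0" "pv N k = k - Suc 0" using nx_last[OF N3] pv_val[of k N] l' by simp_all
    have Hk: "H (insert k S) = G N" using Hins l' by simp
    note V2 = V nk Hk
    have D0: "tD 0 = (1 / real N) * (r / (r + 1) * G k + 1 / (r + 1) * G (k - 1))"
      using l' N3 by (simp add: tD_def V2 add.commute)
    have D1: "tD (k - 1) = (1 / real N) * (1 / (1 + r) * G (k - 1) + r / (1 + r) * G k)"
      using l' N3 by (simp add: tD_def V2 add.commute)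
    have D2: "tD k = G (k + 1) / real N"
      using l' N3 r by (simp add: tD_def V2)
    have B0: "tB 0 = r / F * (G k / 2 + G (k + 1) / 2)"
      using l' N3 by (simp add: tB_def V2)
    have B1: "tB (k - 1) = r / F * (G (k + 1) / 2 + G k / 2)"
      using l' N3 by (simp add: tB_def V2)
    have B2: "tB k = 1 / F * G (k - 1)"
      using l' N3 by (simp add: tB_def V2)
    have f: "fit r S 0 = r" "fit r S (k - 1) = r" "fit r S k = 1"
      using l' by (auto simp: fit_def Smem)
    have sBD: "(\<Sum>v\<in>B. tD v - G k / real N) = (tD 0 - G k / real N) + (tD (k - 1) - G k / real N) + (tD k - G k / real N)"
      using l' N3 by (simp add: B_def)
    have sBB: "(\<Sum>v\<in>B. tB v - fit r S v / F * G k) = (tB 0 - fit r S 0 / F * G k) + (tB (k - 1) - fit r S (k - 1) / F * G k) + (tB k - fit r S k / F * G k)"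
      using l' N3 by (simp add: B_def)
    have eD: "(\<Sum>v\<in>B. tD v - G k / real N) = 1/real N * (G (k+1) - G k) + 2/((1+r)*real N) * (G (k-1) - G k)"
    proof -
      have a: "tD 0 - G k / real N = (G (k-1) - G k) / ((1+r)*real N)"
        unfolding D0 using rp Np by (simp add: divide_simps; simp add: algebra_simps)
      have b: "tD (k-1) - G k / real N = (G (k-1) - G k) / ((1+r)*real N)"
        unfolding D1 using rp Np by (simp add: divide_simps; simp add: algebra_simps)
      have c: "tD k - G k / real N = (G (k+1) - G k) / real N"
        unfolding D2 using rp Np by (simp add: divide_simps; simp add: algebra_simps)
      show ?thesis unfolding sBD a b c by (simp add: divide_simps; simp add: algebra_simps)
    qed
    have eB: "(\<Sum>v\<in>B. tB v - fit r S v / F * G k) = r/F * (G (k+1) - G k) + 1/F * (G (k-1) - G k)"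
      unfolding sBB B0 B1 B2 f using Fpos by (simp add: divide_simps; simp add: algebra_simps)
    have pu': "pu N r d k = (1-d) * (r/F) + d * (1/real N)" using last unfolding pu_def F_def by simp
    have pd': "pd N r d k = (1-d) * (1/F) + d * (2/((1+r)*real N))" using last unfolding pd_def F_def by simp
    show ?thesis unfolding goal0 by (rule comb[OF eD eB pu' pd'])
  qed
qed



primrec hh :: "nat \<Rightarrow> real \<Rightarrow> real \<Rightarrow> nat \<Rightarrow> nat \<Rightarrow> real" where
  "hh N r d 0 k = (if k = N then 1 else 0)"
| "hh N r d (Suc n) k = (if k = 0 then 0 else if k = N then 1 else
     pu N r d k * hh N r d n (k + 1) + pd N r d k * hh N r d n (k - 1) + (1 - pu N r d k - pd N r d k) * hh N r d n k)"

lemma hitp_hh: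
  assumes N3: "N \<ge> 3" and r: "r > 0"
  shows "j \<le> N \<Longrightarrow> hitp {0..<N} (cycle_adj N) r d n {0..<j} = hh N r d n j"
proof (induction n arbitrary: j)
  case 0
  have "{0..<j} = {0..<N} \<longleftrightarrow> j = N" by (simp add: atLeast0LessThan)
  then show ?case by simp
next
  case (Suc n)
  consider "j = 0" | "j = N" | "1 \<le> j" "j \<le> N - 1" using Suc.prems by linarith
  then show ?case
  proof cases
    case 1 then show ?thesis using hitp_empty[OF N3, of r d "Suc n"] N3 by (simp del: hitp.simps)
  next
    case 2 then show ?thesis using hitp_full[OF N3 r, of d "Suc n"] N3 by (simp del: hitp.simps)
  next
    case 3
    then have "j \<noteq> 0" "j \<noteq> N" using N3 by auto
    then show ?thesis using main_comp[OF N3 r 3, of d n "hh N r d n"] Suc.IH by simp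
  qed
qed

lemma conv_pos: "(x::real) > 0 \<Longrightarrow> y > 0 \<Longrightarrow> 0 \<le> d \<Longrightarrow> d \<le> 1 \<Longrightarrow> (1 - d) * x + d * y > 0"
proof (cases "d = 0")
  case False
  assume a: "x > 0" "y > 0" "0 \<le> d" "d \<le> 1"
  then have "d * y > 0" using False by simp
  moreover have "(1 - d) * x \<ge> 0" using a by simp
  ultimately show ?thesis by linarith
qed simp

lemma probs:
  assumes N3: "N \<ge> 3" and r: "r > 0" and d0: "0 \<le> d" and d1: "d \<le> 1" and k1: "1 \<le> k" and kN: "k \<le> N - 1"
  shows "pu N r d k > 0" "pd N r d k > 0" "pu N r d k + pd N r d k \<le> 1"
proof -
  define F where "F = Fk N r k"
  have kk0: "k + 1 \<le> N" using kN N3 by linarith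
  have kk: "real k + 1 \<le> real N" using kk0 by (metis of_nat_1 of_nat_add of_nat_le_iff)
  have k1r: "real k \<ge> 1" using k1 by simp
  have Fge: "F \<ge> 1 + r"
  proof -
    have "r * real k \<ge> r * 1" using k1r r by (intro mult_left_mono) auto
    then show ?thesis unfolding F_def Fk_def using kk by linarith
  qed
  have Fpos: "F > 0" using Fge r by linarith
  have Np: "real N \<ge> 3" using N3 by simp
  have A: "(1 - d) * r / Fk N r k = (1 - d) * (r / F)" "(1 - d) / Fk N r k = (1 - d) * (1 / F)" by (simp_all add: F_def)
  define X where "X = (if k = N - 1 then 1 / real N else 2 * r / ((1 + r) * real N))"
  define Y where "Y = (if k = 1 then 1 / real N else 2 / ((1 + r) * real N))"
  have puX: "pu N r d k = (1 - d) * (r / F) + d * X" unfolding pu_def X_def A by simp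
  have pdY: "pd N r d k = (1 - d) * (1 / F) + d * Y" unfolding pd_def Y_def A by simp
  have Xp: "X > 0" unfolding X_def using r Np by simp
  have Yp: "Y > 0" unfolding Y_def using r Np by simp
  show "pu N r d k > 0" unfolding puX using conv_pos[of "r / F" X d] Fpos r Xp d0 d1 by simp
  show "pd N r d k > 0" unfolding pdY using conv_pos[of "1 / F" Y d] Fpos Xp Yp d0 d1 by simp
  have a1: "r / F + 1 / F \<le> 1"
  proof -
    have "r / F + 1 / F = (r + 1) / F" by (simp add: add_divide_distrib)
    also have "\<dots> \<le> 1" using Fge Fpos by simp
    finally show ?thesis .
  qed
  have rr: "r / (1 + r) \<le> 1" "1 / (1 + r) \<le> 1" "r / (1 + r) + 1 / (1 + r) = 1" using r
    by (simp_all add: add_divide_distrib[symmetric])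
  have e1: "2 * r / ((1 + r) * real N) = (2 / real N) * (r / (1 + r))" by simp
  have e2: "2 / ((1 + r) * real N) = (2 / real N) * (1 / (1 + r))" by simp
  have Npos: "2 / real N > 0" using Np by simp
  have q1: "2 * r / ((1 + r) * real N) \<le> 2 / real N" unfolding e1
    using mult_left_mono[OF rr(1), of "2 / real N"] Npos by simp
  have q2: "2 / ((1 + r) * real N) \<le> 2 / real N" unfolding e2
    using mult_left_mono[OF rr(2), of "2 / real N"] Npos by simp
  have q3: "2 * r / ((1 + r) * real N) + 2 / ((1 + r) * real N) = 2 / real N"
    unfolding e1 e2 using rr(3) by (metis distrib_left mult.right_neutral)
  have q4: "2 / real N + 1 / real N \<le> 1"
  proof -
    have "2 / real N + 1 / real N = 3 / real N" by (simp add: add_divide_distrib[symmetric])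
    also have "\<dots> \<le> 1" using Np by simp
    finally show ?thesis .
  qed
  have q5: "2 / real N \<le> 1" using q4 Np by (smt (verit) divide_pos_pos)
  have XY: "X + Y \<le> 1"
  proof (cases "k = 1")
    case True
    then have "k \<noteq> N - 1" using N3 by auto
    then have "X + Y = 2 * r / ((1 + r) * real N) + 1 / real N" unfolding X_def Y_def using True by simp
    then show ?thesis using q1 q4 by linarith
  next
    case False
    show ?thesis
    proof (cases "k = N - 1")
      case True
      then have "X + Y = 1 / real N + 2 / ((1 + r) * real N)" unfolding X_def Y_def using False by simp
      then show ?thesis using q2 q4 by linarith
    next
      case F2: False
      then have "X + Y = 2 * r / ((1 + r) * real N) + 2 / ((1 + r) * real N)" unfolding X_def Y_def using False by simp
      then show ?thesis using q3 q5 by linarith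
    qed
  qed
  have "pu N r d k + pd N r d k = (1 - d) * (r / F + 1 / F) + d * (X + Y)" unfolding puX pdY by (simp add: algebra_simps)
  also have "\<dots> \<le> (1 - d) * 1 + d * 1"
    by (intro add_mono mult_left_mono) (use a1 XY d0 d1 in auto)
  finally show "pu N r d k + pd N r d k \<le> 1" by simp
qed



lemma hh_zero: "N \<ge> 3 \<Longrightarrow> hh N r d n 0 = 0" by (cases n) auto

lemma hh_N: "N \<ge> 3 \<Longrightarrow> hh N r d n N = 1" by (cases n) auto

lemma hh_bounds:
  assumes N3: "N \<ge> 3" and r: "r > 0" and d0: "0 \<le> d" and d1: "d \<le> 1"
  shows "k \<le> N \<Longrightarrow> 0 \<le> hh N r d n k \<and> hh N r d n k \<le> 1"
proof (induction n arbitrary: k)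
  case 0 then show ?case by simp
next
  case (Suc n)
  show ?case
  proof (cases "k = 0 \<or> k = N")
    case True then show ?thesis by auto
  next
    case False
    then have k1: "1 \<le> k" "k \<le> N - 1" using Suc.prems by auto
    note p = probs[OF N3 r d0 d1 k1]
    let ?a = "hh N r d n (k + 1)" and ?b = "hh N r d n (k - 1)" and ?c = "hh N r d n k"
    have a: "0 \<le> ?a" "?a \<le> 1" using Suc.IH[of "k + 1"] k1 N3 by auto
    have b: "0 \<le> ?b" "?b \<le> 1" using Suc.IH[of "k - 1"] k1 N3 by auto
    have c: "0 \<le> ?c" "?c \<le> 1" using Suc.IH[of k] k1 N3 by auto
    have e: "hh N r d (Suc n) k = pu N r d k * ?a + pd N r d k * ?b + (1 - pu N r d k - pd N r d k) * ?c"
      using False by simp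
    have l: "0 \<le> pu N r d k * ?a + pd N r d k * ?b + (1 - pu N r d k - pd N r d k) * ?c"
      using p a b c by (intro add_nonneg_nonneg mult_nonneg_nonneg) auto
    have u: "pu N r d k * ?a + pd N r d k * ?b + (1 - pu N r d k - pd N r d k) * ?c
        \<le> pu N r d k * 1 + pd N r d k * 1 + (1 - pu N r d k - pd N r d k) * 1"
      using p a b c by (intro add_mono mult_left_mono) auto
    show ?thesis using e l u by simp
  qed
qed

lemma hh_mono:
  assumes N3: "N \<ge> 3" and r: "r > 0" and d0: "0 \<le> d" and d1: "d \<le> 1"
  shows "k \<le> N \<Longrightarrow> hh N r d n k \<le> hh N r d (Suc n) k"
proof (induction n arbitrary: k)
  case 0
  then show ?case using hh_bounds[OF N3 r d0 d1 0, of 1] N3 by auto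
next
  case (Suc n)
  show ?case
  proof (cases "k = 0 \<or> k = N")
    case True then show ?thesis by auto
  next
    case False
    then have k1: "1 \<le> k" "k \<le> N - 1" using Suc.prems by auto
    note p = probs[OF N3 r d0 d1 k1]
    have a: "hh N r d n (k + 1) \<le> hh N r d (Suc n) (k + 1)" using Suc.IH[of "k + 1"] k1 N3 by auto
    have b: "hh N r d n (k - 1) \<le> hh N r d (Suc n) (k - 1)" using Suc.IH[of "k - 1"] k1 N3 by auto
    have c: "hh N r d n k \<le> hh N r d (Suc n) k" using Suc.IH[of k] k1 N3 by auto
    have "pu N r d k * hh N r d n (k + 1) + pd N r d k * hh N r d n (k - 1) + (1 - pu N r d k - pd N r d k) * hh N r d n k
      \<le> pu N r d k * hh N r d (Suc n) (k + 1) + pd N r d k * hh N r d (Suc n) (k - 1) + (1 - pu N r d k - pd N r d k) * hh N r d (Suc n) k"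
      using p a b c by (intro add_mono mult_left_mono) auto
    then show ?thesis using False by (simp only: hh.simps if_False) simp
  qed
qed

lemma hh_lim:
  assumes N3: "N \<ge> 3" and r: "r > 0" and d0: "0 \<le> d" and d1: "d \<le> 1" and k: "k \<le> N"
  shows "(\<lambda>n. hh N r d n k) \<longlonglongrightarrow> lim (\<lambda>n. hh N r d n k)"
proof -
  have "incseq (\<lambda>n. hh N r d n k)" by (rule incseq_SucI) (rule hh_mono[OF N3 r d0 d1 k])
  moreover have "bdd_above (range (\<lambda>n. hh N r d n k))"
    by (rule bdd_aboveI[where M=1]) (use hh_bounds[OF N3 r d0 d1 k] in auto)
  ultimately have "convergent (\<lambda>n. hh N r d n k)" using LIMSEQ_incseq_SUP convergent_def by blast
  then show ?thesis by (simp add: convergent_LIMSEQ_iff)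
qed


lemma gamma_eq:
  assumes N3: "N \<ge> 3" and k1: "1 \<le> k" and kN: "k \<le> N - 1"
  shows "gamma N r d k = pd N r d k / pu N r d k"
proof (cases "k = 1")
  case True
  then have "k \<noteq> N - 1" using N3 by auto
  then show ?thesis using True unfolding gamma_def pu_def pd_def by simp
next
  case False
  then show ?thesis unfolding gamma_def pu_def pd_def by simp
qed

theorem mainTheorem5:
  fixes N :: nat and r d :: real
  assumes "N \<ge> 3" and "r > 0" and "0 \<le> d" and "d \<le> 1"
  shows "fp {0..<N} (cycle_adj N) r d
           = 1 / (1 + (\<Sum>j = 1..N - 1. \<Prod>k = 1..j. gamma N r d k))"
proof -
  note N3 = assms(1) and r = assms(2) and d0 = assms(3) and d1 = assms(4)
  define L where "L k = lim (\<lambda>n. hh N r d n k)" for k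
  have conv: "(\<lambda>n. hh N r d n k) \<longlonglongrightarrow> L k" if "k \<le> N" for k
    unfolding L_def by (rule hh_lim[OF N3 r d0 d1 that])
  have L0: "L 0 = 0" unfolding L_def using hh_zero[OF N3] by (simp add: limI)
  have LN: "L N = 1" unfolding L_def using hh_N[OF N3] by (simp add: limI)
  have rec: "pu N r d k * (L (k + 1) - L k) = pd N r d k * (L k - L (k - 1))" if k1: "1 \<le> k" "k \<le> N - 1" for k
  proof -
    have k0: "k \<noteq> 0" "k \<noteq> N" using k1 N3 by auto
    have t1: "(\<lambda>n. hh N r d (Suc n) k) \<longlonglongrightarrow> L k" using LIMSEQ_Suc[OF conv[of k]] k1 by simp
    have e: "(\<lambda>n. hh N r d (Suc n) k) = (\<lambda>n. pu N r d k * hh N r d n (k + 1) + pd N r d k * hh N r d n (k - 1) + (1 - pu N r d k - pd N r d k) * hh N r d n k)"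
      using k0 by simp
    have t2: "(\<lambda>n. hh N r d (Suc n) k) \<longlonglongrightarrow> pu N r d k * L (k + 1) + pd N r d k * L (k - 1) + (1 - pu N r d k - pd N r d k) * L k"
      unfolding e using k1 N3 by (intro tendsto_intros conv) auto
    have "L k = pu N r d k * L (k + 1) + pd N r d k * L (k - 1) + (1 - pu N r d k - pd N r d k) * L k"
      using LIMSEQ_unique[OF t1 t2] .
    then show ?thesis by (simp add: algebra_simps)
  qed
  have stp: "L (k + 1) - L k = gamma N r d k * (L k - L (k - 1))" if k1: "1 \<le> k" "k \<le> N - 1" for k
  proof -
    have p: "pu N r d k > 0" using probs[OF N3 r d0 d1 k1] by simp
    have "L (k + 1) - L k = pd N r d k * (L k - L (k - 1)) / pu N r d k"
      using rec[OF k1] p by (simp add: eq_divide_eq mult.commute)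
    then show ?thesis unfolding gamma_eq[OF N3 k1] by simp
  qed
  define D where "D j = L (Suc j) - L j" for j
  define P where "P j = (\<Prod>k = 1..j. gamma N r d k)" for j
  have Dp: "j \<le> N - 1 \<Longrightarrow> D j = D 0 * P j" for j
  proof (induction j)
    case 0 then show ?case by (simp add: P_def)
  next
    case (Suc j)
    have "D (Suc j) = gamma N r d (Suc j) * D j"
      unfolding D_def using stp[of "Suc j"] Suc.prems by simp
    also have "\<dots> = D 0 * P (Suc j)" using Suc by (simp add: P_def)
    finally show ?case .
  qed
  have NS: "N = Suc (N - 1)" using N3 by simp
  have "(\<Sum>j<N. D j) = L N - L 0" unfolding D_def by (rule sum_lessThan_telescope)
  then have one: "(\<Sum>j<N. D j) = 1" using L0 LN by simp
  have "(\<Sum>j<N. D j) = D 0 + (\<Sum>i<N - 1. D (Suc i))"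
    by (subst NS) (simp only: sum.lessThan_Suc_shift diff_Suc_1)
  also have "(\<Sum>i<N - 1. D (Suc i)) = (\<Sum>i<N - 1. D 0 * P (Suc i))"
  proof (rule sum.cong[OF refl])
    fix i assume "i \<in> {..<N - 1}"
    then have "Suc i \<le> N - 1" by simp
    then show "D (Suc i) = D 0 * P (Suc i)" by (rule Dp)
  qed
  also have "\<dots> = D 0 * (\<Sum>j = 1..N - 1. P j)"
    by (simp add: sum_distrib_left sum.atLeast1_atMost_eq)
  finally have "D 0 * (1 + (\<Sum>j = 1..N - 1. P j)) = 1" using one by (simp add: algebra_simps)
  then have h: "L 1 * (1 + (\<Sum>j = 1..N - 1. P j)) = 1" using L0 unfolding D_def by simp
  then have nz: "1 + (\<Sum>j = 1..N - 1. P j) \<noteq> 0" by auto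
  have L1: "L 1 = 1 / (1 + (\<Sum>j = 1..N - 1. P j))"
    using h nz by (simp add: eq_divide_eq)
  have fpu: "fp_from {0..<N} (cycle_adj N) r d {u} = L 1" if "u \<in> {0..<N}" for u
  proof -
    have "rt N u ` {0..<1} = {u}" using that by (simp add: rt_def)
    then have "hitp {0..<N} (cycle_adj N) r d n {u} = hh N r d n 1" for n
      using hitp_rt[OF N3, of "{0..<1}" r d n u] hitp_hh[OF N3 r, of 1 d n] N3 by simp
    then show ?thesis unfolding fp_from_def L_def by simp
  qed
  have "fp {0..<N} (cycle_adj N) r d = (1 / real N) * (\<Sum>u\<in>{0..<N}. L 1)"
    unfolding fp_def using fpu by simp
  also have "\<dots> = L 1" using N3 by simp
  finally show ?thesis unfolding L1 P_def .
qed


end
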